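(* Let $D$ be the $N\times N$ matrix with all entries equal to $1/N$. For every choice model $\lambda$ on $S_N$ with $\|\lambda\|_0=k\le N$, one has $\|M(\lambda)-D\|_2\ge \sqrt{1-k/N}$. In particular, any choice model with support size $o(N)$ has $\|M(\lambda)-D\|_2\ge 1-o(1)$ as $N\to\infty$.
   Context: $S_N$ is the set of permutations of $\{1,\dots,N\}$; a choice model is a probability distribution $\lambda$ on $S_N$, $\|\lambda\|_0=|\{\sigma:\lambda(\sigma)>0\}|$, and $M_{ij}(\lambda)=\sum_{\sigma}\lambda(\sigma)\mathbf 1_{\{\sigma(i)=j\}}$. $\|A\|_2=(\sum_{i,j}A_{ij}^2)^{1/2}$. *)

theory Defs
  imports "HOL-Analysis.Analysis" "HOL-Combinatorics.Permutations"
begin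

definition SN :: "nat \<Rightarrow> (nat \<Rightarrow> nat) set" where
  "SN N = {\<sigma>. \<sigma> permutes {1..N}}"

definition choice_model :: "nat \<Rightarrow> ((nat \<Rightarrow> nat) \<Rightarrow> real) \<Rightarrow> bool" where
  "choice_model N lam \<longleftrightarrow> (\<forall>\<sigma>. 0 \<le> lam \<sigma>) \<and> (\<forall>\<sigma>. \<sigma> \<notin> SN N \<longrightarrow> lam \<sigma> = 0)
     \<and> (\<Sum>\<sigma>\<in>SN N. lam \<sigma>) = 1"

definition supp_size :: "((nat \<Rightarrow> nat) \<Rightarrow> real) \<Rightarrow> nat" where
  "supp_size lam = card {\<sigma>. lam \<sigma> > 0}"

definition Mmat :: "nat \<Rightarrow> ((nat \<Rightarrow> nat) \<Rightarrow> real) \<Rightarrow> nat \<Rightarrow> nat \<Rightarrow> real" where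
  "Mmat N lam i j = (\<Sum>\<sigma>\<in>SN N. lam \<sigma> * (if \<sigma> i = j then 1 else 0))"

definition distD :: "nat \<Rightarrow> ((nat \<Rightarrow> nat) \<Rightarrow> real) \<Rightarrow> real" where
  "distD N lam = sqrt (\<Sum>i\<in>{1..N}. \<Sum>j\<in>{1..N}. (Mmat N lam i j - 1 / real N)\<^sup>2)"

end

theory Submission
  imports Defs
begin

lemma sq_sum_ge:
  fixes f :: "'a \<Rightarrow> real"
  assumes "finite P" "card P > 0"
  shows "(\<Sum>x\<in>P. f x ^ 2) \<ge> (\<Sum>x\<in>P. f x)^2 / card P"
proof -
  define c where "c = (\<Sum>x\<in>P. f x) / card P"
  have "0 \<le> (\<Sum>x\<in>P. (f x - c)^2)" by (simp add: sum_nonneg)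
  also have "\<dots> = (\<Sum>x\<in>P. f x ^ 2) - 2*c*(\<Sum>x\<in>P. f x) + card P * c^2"
    by (simp add: power2_diff sum.distrib sum_subtractf sum_distrib_left sum_distrib_right algebra_simps)
  also have "\<dots> = (\<Sum>x\<in>P. f x ^ 2) - (\<Sum>x\<in>P. f x)^2 / card P"
    using assms by (simp add: c_def field_simps power2_eq_square)
  finally show ?thesis by simp
qed

lemma part1:
  assumes cm: "choice_model N lam" and k: "supp_size lam \<le> N"
  shows "distD N lam \<ge> sqrt (1 - real (supp_size lam) / real N)"
proof -
  let ?S = "SN N"
  let ?P = "{\<sigma>. lam \<sigma> > 0}"
  let ?M = "Mmat N lam"
  define k where "k = supp_size lam"
  have finS: "finite ?S" unfolding SN_def using finite_permutations by blast
  have nn: "\<And>\<sigma>. 0 \<le> lam \<sigma>" and out: "\<And>\<sigma>. \<sigma> \<notin> ?S \<Longrightarrow> lam \<sigma> = 0"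
    and s1: "(\<Sum>\<sigma>\<in>?S. lam \<sigma>) = 1" using cm unfolding choice_model_def by auto
  have PS: "?P \<subseteq> ?S" using out by force
  have finP: "finite ?P" using PS finS finite_subset by blast
  have sP: "(\<Sum>\<sigma>\<in>?P. lam \<sigma>) = 1"
    using s1 sum.mono_neutral_left[OF finS PS, of lam] nn by (smt (verit) DiffD2 mem_Collect_eq)
  have kpos: "k > 0" unfolding k_def supp_size_def
    using sP finP by (metis card_gt_0_iff sum.empty zero_neq_one)
  have Npos: "N > 0" using kpos k k_def by simp
  have perm: "\<And>\<sigma> i. \<sigma> \<in> ?S \<Longrightarrow> i \<in> {1..N} \<Longrightarrow> \<sigma> i \<in> {1..N}"
    proof -
    fix \<sigma> i assume a: "\<sigma> \<in> ?S" "i \<in> {1..N}"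
    from a(1) have "\<sigma> permutes {1..N}" unfolding SN_def by simp
    from permutes_in_image[OF this, of i] a(2) show "\<sigma> i \<in> {1..N}" by blast
  qed
  have Mnn: "\<And>i j. 0 \<le> ?M i j" unfolding Mmat_def by (simp add: sum_nonneg nn)
  have row: "(\<Sum>j\<in>{1..N}. ?M i j) = 1" if i: "i \<in> {1..N}" for i
  proof -
    have "(\<Sum>j\<in>{1..N}. ?M i j) = (\<Sum>j\<in>{1..N}. \<Sum>\<sigma>\<in>?S. lam \<sigma> * (if \<sigma> i = j then 1 else 0))"
      unfolding Mmat_def by simp
    also have "\<dots> = (\<Sum>\<sigma>\<in>?S. \<Sum>j\<in>{1..N}. lam \<sigma> * (if \<sigma> i = j then 1 else 0))"
      by (rule sum.swap)
    also have "\<dots> = (\<Sum>\<sigma>\<in>?S. lam \<sigma>)"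
    proof (rule sum.cong)
      fix \<sigma> assume "\<sigma> \<in> ?S"
      with perm[OF this i] show "(\<Sum>j\<in>{1..N}. lam \<sigma> * (if \<sigma> i = j then 1 else 0)) = lam \<sigma>"
        by (simp add: sum_distrib_left[symmetric])
    qed simp
    finally show ?thesis using s1 by simp
  qed
  have rowsq: "(\<Sum>j\<in>{1..N}. (?M i j)^2) \<ge> 1 / k" if i: "i \<in> {1..N}" for i
  proof -
    have "(\<Sum>j\<in>{1..N}. (?M i j)^2) = (\<Sum>j\<in>{1..N}. ?M i j * (\<Sum>\<sigma>\<in>?S. lam \<sigma> * (if \<sigma> i = j then 1 else 0)))"
      by (simp add: power2_eq_square Mmat_def)
    also have "\<dots> = (\<Sum>\<sigma>\<in>?S. lam \<sigma> * (\<Sum>j\<in>{1..N}. ?M i j * (if \<sigma> i = j then 1 else 0)))"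
      by (simp add: sum_distrib_left algebra_simps, rule sum.swap)
    also have "\<dots> = (\<Sum>\<sigma>\<in>?S. lam \<sigma> * ?M i (\<sigma> i))"
    proof (rule sum.cong)
      fix \<sigma> assume "\<sigma> \<in> ?S"
      with perm[OF this i] show "lam \<sigma> * (\<Sum>j\<in>{1..N}. ?M i j * (if \<sigma> i = j then 1 else 0)) = lam \<sigma> * ?M i (\<sigma> i)"
        by (simp add: if_distrib[of "\<lambda>x. ?M i _ * x"] cong: if_cong)
    qed simp
    also have "\<dots> \<ge> (\<Sum>\<sigma>\<in>?S. lam \<sigma> * lam \<sigma>)"
    proof (rule sum_mono)
      fix \<sigma> assume s: "\<sigma> \<in> ?S"
      have "lam \<sigma> = lam \<sigma> * (if \<sigma> i = \<sigma> i then 1 else 0)" by simp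
      also have "\<dots> \<le> ?M i (\<sigma> i)" unfolding Mmat_def
        by (rule member_le_sum[OF s _ finS, where f="\<lambda>\<tau>. lam \<tau> * (if \<tau> i = \<sigma> i then 1 else 0)"]) (simp add: nn)
      finally show "lam \<sigma> * lam \<sigma> \<le> lam \<sigma> * ?M i (\<sigma> i)" by (simp add: mult_left_mono nn)
    qed
    also have "(\<Sum>\<sigma>\<in>?S. lam \<sigma> * lam \<sigma>) = (\<Sum>\<sigma>\<in>?P. lam \<sigma> ^ 2)"
    proof -
      have "(\<Sum>\<sigma>\<in>?P. lam \<sigma> ^ 2) = (\<Sum>\<sigma>\<in>?S. lam \<sigma> ^ 2)"
      proof (rule sum.mono_neutral_left[OF finS PS], intro ballI)
        fix \<sigma> assume "\<sigma> \<in> ?S - ?P"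
        hence "lam \<sigma> = 0" using nn[of \<sigma>] by auto
        thus "lam \<sigma> ^ 2 = 0" by simp
      qed
      thus ?thesis by (simp add: power2_eq_square)
    qed
    also have "(\<Sum>\<sigma>\<in>?P. lam \<sigma> ^ 2) \<ge> 1 / k"
      using sq_sum_ge[OF finP, of lam] kpos sP unfolding k_def supp_size_def by simp
    finally show ?thesis by simp
  qed
  have rowd: "(\<Sum>j\<in>{1..N}. (?M i j - 1 / N)^2) \<ge> 1 / k - 1 / N" if i: "i \<in> {1..N}" for i
  proof -
    have "(\<Sum>j\<in>{1..N}. (?M i j - 1 / N)^2) = (\<Sum>j\<in>{1..N}. (?M i j)^2) - 2 / N * (\<Sum>j\<in>{1..N}. ?M i j) + N * (1/N)^2"
      by (simp add: power2_diff sum.distrib sum_subtractf sum_distrib_left algebra_simps)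
    also have "\<dots> = (\<Sum>j\<in>{1..N}. (?M i j)^2) - 1 / N"
      using row[OF i] Npos by (simp add: power2_eq_square)
    finally show ?thesis using rowsq[OF i] by simp
  qed
  have "(\<Sum>i\<in>{1..N}. \<Sum>j\<in>{1..N}. (?M i j - 1 / N)^2) \<ge> (\<Sum>i\<in>{1..N}. 1 / k - 1 / N)"
    by (rule sum_mono) (rule rowd)
  also have "(\<Sum>i\<in>{1..N}. 1 / k - 1 / N) = N / k - 1" using Npos by (simp add: right_diff_distrib)
  finally have A: "(\<Sum>i\<in>{1..N}. \<Sum>j\<in>{1..N}. (?M i j - 1 / N)^2) \<ge> N / k - 1" .
  have "1 - k / N \<le> N / k - 1"
  proof -
    have "(real N - k)^2 \<ge> 0" by simp
    hence "0 \<le> (real N)^2 - 2 * N * k + (real k)^2" by (simp add: power2_diff)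
    thus ?thesis using Npos kpos by (simp add: field_simps power2_eq_square)
  qed
  with A show ?thesis unfolding distD_def k_def[symmetric] by (simp add: real_sqrt_le_iff)
qed

theorem mainTheorem3:
  shows "(\<forall>N lam. choice_model N lam \<and> supp_size lam \<le> N \<longrightarrow>
            distD N lam \<ge> sqrt (1 - real (supp_size lam) / real N))
       \<and> (\<forall>lam :: nat \<Rightarrow> ((nat \<Rightarrow> nat) \<Rightarrow> real).
            (\<forall>N. choice_model N (lam N)) \<and>
            ((\<lambda>N. real (supp_size (lam N)) / real N) \<longlongrightarrow> 0) sequentially \<longrightarrow>
            (\<forall>\<epsilon>>0. eventually (\<lambda>N. distD N (lam N) \<ge> 1 - \<epsilon>) sequentially))"
proof (intro conjI allI impI)
  fix N lam assume "choice_model N lam \<and> supp_size lam \<le> N"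
  thus "distD N lam \<ge> sqrt (1 - real (supp_size lam) / real N)" using part1 by blast
next
  fix lam :: "nat \<Rightarrow> ((nat \<Rightarrow> nat) \<Rightarrow> real)" and \<epsilon> :: real
  assume H: "(\<forall>N. choice_model N (lam N)) \<and>
            ((\<lambda>N. real (supp_size (lam N)) / real N) \<longlongrightarrow> 0) sequentially"
    and e: "\<epsilon> > 0"
  show "eventually (\<lambda>N. distD N (lam N) \<ge> 1 - \<epsilon>) sequentially"
  proof (cases "\<epsilon> \<ge> 1")
    case True
    show ?thesis proof (rule always_eventually, intro allI)
      fix N
      have "0 \<le> distD N (lam N)" unfolding distD_def by (simp add: sum_nonneg)
      thus "distD N (lam N) \<ge> 1 - \<epsilon>" using True by linarith
    qed
  next
    case False
    define d where "d = min 1 (1 - (1 - \<epsilon>)^2)"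
    have dpos: "d > 0" proof -
      have "\<epsilon>*(2-\<epsilon>) > 0" using e False by simp
      moreover have "1 - (1-\<epsilon>)^2 = \<epsilon>*(2-\<epsilon>)" by (simp add: power2_eq_square algebra_simps)
      ultimately show ?thesis unfolding d_def by simp
    qed
    have ev: "eventually (\<lambda>N. real (supp_size (lam N)) / real N < d) sequentially"
      using H dpos order_tendstoD(2) by blast
    show ?thesis
    proof (rule eventually_mono[OF eventually_conj[OF ev eventually_gt_at_top[of 0]]])
      fix N assume a: "real (supp_size (lam N)) / real N < d \<and> 0 < N"
      have "real (supp_size (lam N)) / real N < 1" using a unfolding d_def by linarith
      hence le: "supp_size (lam N) \<le> N"
        using a by (simp add: divide_less_eq)
      have "1 - \<epsilon> \<le> sqrt (1 - real (supp_size (lam N)) / real N)"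
        using a unfolding d_def by (intro real_le_rsqrt) linarith
      also have "\<dots> \<le> distD N (lam N)" using part1 H le by blast
      finally show "distD N (lam N) \<ge> 1 - \<epsilon>" .
    qed
  qed
qed

end
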